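(* Let $\mathcal{X}$ be a real Hilbert space, let $d_1,d_2,d_3:\mathcal{X}\to(-\infty,+\infty]$ be proper closed convex functions and $\gamma>0$. Let $z^0\in\mathcal{X}$ and for $k=0,1,\dots$ define $w^k_{d_3}=\operatorname{prox}^\gamma_{d_3}(z^k)$; choose $\nabla d_2(w^k_{d_3})\in\partial d_2(w^k_{d_3})$; $w^k_{d_1}=\operatorname{prox}^\gamma_{d_1}\big(2w^k_{d_3}-z^k-\gamma\nabla d_2(w^k_{d_3})\big)$; $w^k_{d_2}=\operatorname{prox}^\gamma_{d_2}\big(w^k_{d_1}+\gamma\nabla d_2(w^k_{d_3})\big)$; $z^{k+1}=z^k+w^k_{d_2}-w^k_{d_3}$, and set $\nabla d_2(w^k_{d_2}):=\gamma^{-1}(w^k_{d_1}+\gamma\nabla d_2(w^k_{d_3})-w^k_{d_2})\in\partial d_2(w^k_{d_2})$. Let $w^*$ be a fixed point of this iteration (i.e. of the map $z^k\mapsto z^{k+1}$). Then for every $k\ge0$, $$\begin{aligned} &2\gamma\big(d_1(w^k_{d_1})+d_2(w^k_{d_3})+d_3(w^k_{d_3})-(d_1+d_2+d_3)(w^* )\big)\\ &\le \|z^k-w^*\|^2-\|z^k-z^{k+1}\|^2-\|z^{k+1}-w^*\|^2+2\gamma\langle\nabla d_2(w^k_{d_3})-\nabla d_2(w^k_{d_2}),z^k-w^*\rangle\\ &\quad-2\gamma\langle\nabla d_2(w^k_{d_3})-\nabla d_2(w^k_{d_2}),z^k-z^{k+1}\rangle+2\gamma\langle z^k-z^{k+1},\nabla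 d_2(w^k_{d_2})\rangle\\ &\quad+2\gamma^2\langle\nabla d_2(w^k_{d_3})-\nabla d_2(w^k_{d_2}),\nabla d_2(w^k_{d_2})\rangle. \end{aligned}$$
   Context: $\operatorname{prox}^\gamma_f(x)=\arg\min_{y}\big(f(y)+\frac{1}{2\gamma}\|y-x\|^2\big)$; one has $\tilde w=\operatorname{prox}^\gamma_f(w)$ iff $\gamma^{-1}(w-\tilde w)\in\partial f(\tilde w)$. The symbol $\nabla d_2(\cdot)$ denotes the specific subgradients indicated (gradients if $d_2$ is differentiable). *)

theory Defs
  imports "HOL-Analysis.Analysis" "HOL-Library.Extended_Real"
begin

definition epigraph_e :: "('a \<Rightarrow> ereal) \<Rightarrow> ('a \<times> real) set" where
  "epigraph_e f = {(x, r). f x \<le> ereal r}"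

definition proper_fun :: "('a \<Rightarrow> ereal) \<Rightarrow> bool" where
  "proper_fun f \<longleftrightarrow> (\<forall>x. f x \<noteq> -\<infinity>) \<and> (\<exists>x. f x \<noteq> \<infinity>)"

definition convex_fun :: "('a::real_vector \<Rightarrow> ereal) \<Rightarrow> bool" where
  "convex_fun f \<longleftrightarrow> convex (epigraph_e f)"

definition closed_fun :: "('a::topological_space \<Rightarrow> ereal) \<Rightarrow> bool" where
  "closed_fun f \<longleftrightarrow> closed (epigraph_e f)"

definition subdiff :: "('a::real_inner \<Rightarrow> ereal) \<Rightarrow> 'a \<Rightarrow> 'a set" where
  "subdiff f x = {g. \<forall>y. f x + ereal (inner g (y - x)) \<le> f y}"

text \<open>Proximal operator: the set of minimizers of f(y) + |y - x|^2/(2 gamma)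
  (a singleton for proper closed convex f on a Hilbert space).\<close>
definition prox :: "real \<Rightarrow> ('a::real_normed_vector \<Rightarrow> ereal) \<Rightarrow> 'a \<Rightarrow> 'a set" where
  "prox \<gamma> f x = {y. \<forall>u. f y + ereal ((norm (y - x))\<^sup>2 / (2 * \<gamma>))
                         \<le> f u + ereal ((norm (u - x))\<^sup>2 / (2 * \<gamma>))}"

end

theory Submission imports Defs begin

lemma convex_fun_ineq:
  assumes "convex_fun f" "f a = ereal p" "f b = ereal q" "0 \<le> t" "t \<le> 1"
  shows "f ((1-t) *\<^sub>R a + t *\<^sub>R b) \<le> ereal ((1-t)*p + t*q)"
proof -
  have "(a,p) \<in> epigraph_e f" "(b,q) \<in> epigraph_e f" using assms by (auto simp: epigraph_e_def)
  then have "(1-t) *\<^sub>R (a,p) + t *\<^sub>R (b,q) \<in> epigraph_e f"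
    using assms(1,4,5) unfolding convex_fun_def by (intro convexD) auto
  then show ?thesis by (simp add: epigraph_e_def)
qed

lemma small_t:
  fixes A B C :: real
  assumes "C \<ge> 0" "\<And>t. 0 < t \<Longrightarrow> t \<le> 1 \<Longrightarrow> A \<le> B + t * C"
  shows "A \<le> B"
proof (rule ccontr)
  assume "\<not> A \<le> B"
  then have AB: "A - B > 0" by simp
  show False
  proof (cases "C = 0")
    case True then show False using assms(2)[of 1] AB by simp
  next
    case False
    then have C: "C > 0" using assms(1) by simp
    define t where "t = min 1 ((A - B) / (2*C))"
    have t0: "0 < t" using AB C by (simp add: t_def)
    have "t \<le> (A - B)/(2*C)" by (simp add: t_def)
    then have "t * C \<le> (A - B)/(2*C) * C" by (rule mult_right_mono) (use C in auto)
    also have "\<dots> = (A-B)/2" using C by simp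
    finally show False using assms(2)[OF t0] AB by (simp add: t_def)
  qed
qed

lemma prox_subgrad:
  fixes f :: "'a::real_inner \<Rightarrow> ereal"
  assumes pf: "proper_fun f" and cf: "convex_fun f" and g: "\<gamma> > 0" and y: "y \<in> prox \<gamma> f x"
  shows "\<bar>f y\<bar> \<noteq> \<infinity>" "f y + ereal (inner ((1/\<gamma>) *\<^sub>R (x - y)) (u - y)) \<le> f u"
proof -
  have yi: "\<And>v. f y + ereal ((norm (y - x))\<^sup>2 / (2 * \<gamma>)) \<le> f v + ereal ((norm (v - x))\<^sup>2 / (2 * \<gamma>))"
    using y by (simp add: prox_def)
  obtain x0 where x0: "f x0 \<noteq> \<infinity>" using pf by (auto simp: proper_fun_def)
  have nm: "\<And>v. f v \<noteq> -\<infinity>" using pf by (auto simp: proper_fun_def)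
  have "f y \<noteq> \<infinity>"
  proof
    assume "f y = \<infinity>"
    then have "f x0 + ereal ((norm (x0 - x))\<^sup>2 / (2 * \<gamma>)) = \<infinity>" using yi[of x0] by simp
    then show False using x0 nm[of x0] by (cases "f x0") auto
  qed
  then show fin: "\<bar>f y\<bar> \<noteq> \<infinity>" using nm[of y] by auto
  then obtain fy where fy: "f y = ereal fy" by (cases "f y") auto
  show "f y + ereal (inner ((1/\<gamma>) *\<^sub>R (x - y)) (u - y)) \<le> f u"
  proof (cases "f u = \<infinity>")
    case True then show ?thesis using fy by simp
  next
    case False
    then obtain fu where fu: "f u = ereal fu" using nm[of u] by (cases "f u") auto
    have key: "fy - fu \<le> inner (y - x) (u - y) / \<gamma> + t * ((norm (u - y))\<^sup>2 / (2*\<gamma>))"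
      if t: "0 < t" "t \<le> 1" for t
    proof -
      define ut where "ut = (1-t) *\<^sub>R y + t *\<^sub>R u"
      have ut': "ut - x = (y - x) + t *\<^sub>R (u - y)" by (simp add: ut_def algebra_simps)
      have c: "f ut \<le> ereal ((1-t)*fy + t*fu)" unfolding ut_def
        using convex_fun_ineq[OF cf fy fu] t by simp
      have "ereal (fy + (norm (y - x))\<^sup>2 / (2 * \<gamma>)) \<le> f ut + ereal ((norm (ut - x))\<^sup>2 / (2 * \<gamma>))"
        using yi[of ut] fy by simp
      also have "\<dots> \<le> ereal ((1-t)*fy + t*fu) + ereal ((norm (ut - x))\<^sup>2 / (2 * \<gamma>))"
        using c by (rule add_right_mono)
      finally have r: "fy + (norm (y - x))\<^sup>2 / (2 * \<gamma>) \<le> (1-t)*fy + t*fu + (norm (ut - x))\<^sup>2 / (2 * \<gamma>)"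
        by simp
      have n: "(norm (ut - x))\<^sup>2 = (norm (y - x))\<^sup>2 + 2 * t * inner (y - x) (u - y) + t\<^sup>2 * (norm (u - y))\<^sup>2"
        unfolding ut' power2_norm_eq_inner by (simp add: inner_add_left inner_add_right algebra_simps power2_eq_square inner_commute)
      have nn: "(norm (ut - x))\<^sup>2 / (2 * \<gamma>) = (norm (y - x))\<^sup>2 / (2 * \<gamma>) + (2 * t * inner (y - x) (u - y) + t\<^sup>2 * (norm (u - y))\<^sup>2) / (2*\<gamma>)"
        unfolding n by (simp add: add_divide_distrib)
      have "t * (fy - fu) \<le> (2 * t * inner (y - x) (u - y) + t\<^sup>2 * (norm (u - y))\<^sup>2) / (2*\<gamma>)"
        using r unfolding nn by (simp add: algebra_simps)
      also have "\<dots> = t * (inner (y - x) (u - y) / \<gamma> + t * ((norm (u - y))\<^sup>2 / (2*\<gamma>)))"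
        using g by (simp add: field_simps power2_eq_square)
      finally show ?thesis using t by simp
    qed
    have "fy - fu \<le> inner (y - x) (u - y) / \<gamma>"
      by (rule small_t[OF _ key]) (use g in auto)
    moreover have "inner ((1/\<gamma>) *\<^sub>R (x - y)) (u - y) = - (inner (y - x) (u - y) / \<gamma>)"
      by (simp add: inner_diff_left diff_divide_distrib)
    ultimately show ?thesis using fy fu by simp
  qed
qed

lemma ident:
  fixes x w1 w2 w3 g3 s :: "'a::real_inner" and \<gamma> :: real
  assumes "\<gamma> \<noteq> 0"
  defines "x1 \<equiv> x + w2 - w3" and "g2 \<equiv> (1 / \<gamma>) *\<^sub>R (w1 + \<gamma> *\<^sub>R g3 - w2)"
  shows "(norm (x - s))\<^sup>2 - (norm (x - x1))\<^sup>2 - (norm (x1 - s))\<^sup>2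
          + 2 * \<gamma> * inner (g3 - g2) (x - s)
          - 2 * \<gamma> * inner (g3 - g2) (x - x1)
          + 2 * \<gamma> * inner (x - x1) g2
          + 2 * \<gamma>\<^sup>2 * inner (g3 - g2) g2
   = 2 * inner (2 *\<^sub>R w3 - x - \<gamma> *\<^sub>R g3 - w1) (w1 - s) + 2 * \<gamma> * inner g3 (w3 - s) + 2 * inner (x - w3) (w3 - s)"
proof -
  have e1: "\<gamma> *\<^sub>R g2 = w1 + \<gamma> *\<^sub>R g3 - w2" using assms(1) by (simp add: g2_def)
  have e2: "\<gamma> *\<^sub>R (g3 - g2) = w2 - w1" using e1 by (simp add: algebra_simps)
  have "2 * \<gamma> * inner (g3 - g2) (x - s) = 2 * inner (w2 - w1) (x - s)"
    by (metis e2 inner_scaleR_left mult.assoc)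
  moreover have "2 * \<gamma> * inner (g3 - g2) (x - x1) = 2 * inner (w2 - w1) (x - x1)"
    by (metis e2 inner_scaleR_left mult.assoc)
  moreover have "2 * \<gamma> * inner (x - x1) g2 = 2 * inner (x - x1) (w1 + \<gamma> *\<^sub>R g3 - w2)"
    by (metis e1 inner_scaleR_right mult.assoc)
  moreover have "2 * \<gamma>\<^sup>2 * inner (g3 - g2) g2 = 2 * inner (w2 - w1) (w1 + \<gamma> *\<^sub>R g3 - w2)"
    by (metis e1 e2 inner_scaleR_right inner_scaleR_left mult.assoc power2_eq_square)
  ultimately show ?thesis unfolding x1_def power2_norm_eq_inner
    by (simp add: inner_diff_left inner_diff_right inner_add_left inner_add_right algebra_simps inner_commute)
qed
theorem proposition4:
  fixes d1 d2 d3 :: "'a::{real_inner, complete_space} \<Rightarrow> ereal"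
    and \<gamma> :: real
    and z w1 w2 w3 g3 :: "nat \<Rightarrow> 'a"
    and wstar :: 'a
    and k :: nat
  assumes d1: "proper_fun d1" "closed_fun d1" "convex_fun d1"
    and d2: "proper_fun d2" "closed_fun d2" "convex_fun d2"
    and d3: "proper_fun d3" "closed_fun d3" "convex_fun d3"
    and gam: "\<gamma> > 0"
    and it_w3: "\<And>k. w3 k \<in> prox \<gamma> d3 (z k)"
    and it_g3: "\<And>k. g3 k \<in> subdiff d2 (w3 k)"
    and it_w1: "\<And>k. w1 k \<in> prox \<gamma> d1 (2 *\<^sub>R w3 k - z k - \<gamma> *\<^sub>R g3 k)"
    and it_w2: "\<And>k. w2 k \<in> prox \<gamma> d2 (w1 k + \<gamma> *\<^sub>R g3 k)"
    and it_z: "\<And>k. z (Suc k) = z k + w2 k - w3 k"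
    and fixpt: "\<exists>a g b c. a \<in> prox \<gamma> d3 wstar \<and> g \<in> subdiff d2 a
                 \<and> b \<in> prox \<gamma> d1 (2 *\<^sub>R a - wstar - \<gamma> *\<^sub>R g)
                 \<and> c \<in> prox \<gamma> d2 (b + \<gamma> *\<^sub>R g)
                 \<and> wstar + c - a = wstar"
  shows "let g2 = (1 / \<gamma>) *\<^sub>R (w1 k + \<gamma> *\<^sub>R g3 k - w2 k) in
     ereal (2 * \<gamma>) * (d1 (w1 k) + d2 (w3 k) + d3 (w3 k) - (d1 wstar + d2 wstar + d3 wstar))
     \<le> ereal ((norm (z k - wstar))\<^sup>2 - (norm (z k - z (Suc k)))\<^sup>2 - (norm (z (Suc k) - wstar))\<^sup>2
          + 2 * \<gamma> * inner (g3 k - g2) (z k - wstar)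
          - 2 * \<gamma> * inner (g3 k - g2) (z k - z (Suc k))
          + 2 * \<gamma> * inner (z k - z (Suc k)) g2
          + 2 * \<gamma>\<^sup>2 * inner (g3 k - g2) g2)"
proof -
  define x where "x = z k"
  define P where "P = 2 *\<^sub>R w3 k - z k - \<gamma> *\<^sub>R g3 k"
  have s1: "\<bar>d1 (w1 k)\<bar> \<noteq> \<infinity>" and i1: "d1 (w1 k) + ereal (inner ((1/\<gamma>) *\<^sub>R (P - w1 k)) (wstar - w1 k)) \<le> d1 wstar"
    using prox_subgrad[OF d1(1) d1(3) gam it_w1[of k, folded P_def]] by auto
  have s3: "\<bar>d3 (w3 k)\<bar> \<noteq> \<infinity>" and i3: "d3 (w3 k) + ereal (inner ((1/\<gamma>) *\<^sub>R (z k - w3 k)) (wstar - w3 k)) \<le> d3 wstar"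
    using prox_subgrad[OF d3(1) d3(3) gam it_w3[of k]] by auto
  have i2: "\<And>y. d2 (w3 k) + ereal (inner (g3 k) (y - w3 k)) \<le> d2 y"
    using it_g3[of k] by (simp add: subdiff_def)
  have nm: "\<And>f v. proper_fun f \<Longrightarrow> f v \<noteq> -\<infinity>" by (auto simp: proper_fun_def)
  have s2: "\<bar>d2 (w3 k)\<bar> \<noteq> \<infinity>"
  proof -
    obtain x0 where x0: "d2 x0 \<noteq> \<infinity>" using d2(1) by (auto simp: proper_fun_def)
    have "d2 (w3 k) \<noteq> \<infinity>" using i2[of x0] x0 by auto
    then show ?thesis using nm[OF d2(1)] by auto
  qed
  obtain a1 where a1: "d1 (w1 k) = ereal a1" using s1 by (cases "d1 (w1 k)") auto
  obtain a2 where a2: "d2 (w3 k) = ereal a2" using s2 by (cases "d2 (w3 k)") auto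
  obtain a3 where a3: "d3 (w3 k) = ereal a3" using s3 by (cases "d3 (w3 k)") auto
  define g2 where "g2 = (1 / \<gamma>) *\<^sub>R (w1 k + \<gamma> *\<^sub>R g3 k - w2 k)"
  define R where "R = (norm (z k - wstar))\<^sup>2 - (norm (z k - z (Suc k)))\<^sup>2 - (norm (z (Suc k) - wstar))\<^sup>2
          + 2 * \<gamma> * inner (g3 k - g2) (z k - wstar)
          - 2 * \<gamma> * inner (g3 k - g2) (z k - z (Suc k))
          + 2 * \<gamma> * inner (z k - z (Suc k)) g2
          + 2 * \<gamma>\<^sup>2 * inner (g3 k - g2) g2"
  have Rid: "R = 2 * inner (P - w1 k) (w1 k - wstar) + 2 * \<gamma> * inner (g3 k) (w3 k - wstar) + 2 * inner (z k - w3 k) (w3 k - wstar)"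
    unfolding R_def g2_def it_z P_def by (rule ident) (use gam in simp)
  have goal: "ereal (2 * \<gamma>) * (d1 (w1 k) + d2 (w3 k) + d3 (w3 k) - (d1 wstar + d2 wstar + d3 wstar)) \<le> ereal R"
  proof (cases "d1 wstar = \<infinity> \<or> d2 wstar = \<infinity> \<or> d3 wstar = \<infinity>")
    case True
    then have "d1 wstar + d2 wstar + d3 wstar = \<infinity>"
      using nm[OF d1(1)] nm[OF d2(1)] nm[OF d3(1)] by auto
    then have S: "d1 wstar + d2 wstar + d3 wstar = \<infinity>" .
    show ?thesis unfolding S a1 a2 a3 using gam by simp
  next
    case False
    then obtain b1 b2 b3 where b1: "d1 wstar = ereal b1" and b2: "d2 wstar = ereal b2" and b3: "d3 wstar = ereal b3"
      using nm[OF d1(1)] nm[OF d2(1)] nm[OF d3(1)]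
      by (metis ereal_cases)
    have j1: "a1 + inner ((1/\<gamma>) *\<^sub>R (P - w1 k)) (wstar - w1 k) \<le> b1" using i1 a1 b1 by simp
    have j2: "a2 + inner (g3 k) (wstar - w3 k) \<le> b2" using i2[of wstar] a2 b2 by simp
    have j3: "a3 + inner ((1/\<gamma>) *\<^sub>R (z k - w3 k)) (wstar - w3 k) \<le> b3" using i3 a3 b3 by simp
    have q1: "2 * \<gamma> * inner ((1/\<gamma>) *\<^sub>R (P - w1 k)) (wstar - w1 k) = - 2 * inner (P - w1 k) (w1 k - wstar)"
    proof -
      have h1: "\<And>v w. 2 * \<gamma> * inner ((1/\<gamma>) *\<^sub>R v) w = 2 * inner v w" using gam by simp
      show ?thesis unfolding h1 by (simp add: inner_diff_right)
    qed
    have q3: "2 * \<gamma> * inner ((1/\<gamma>) *\<^sub>R (z k - w3 k)) (wstar - w3 k) = - 2 * inner (z k - w3 k) (w3 k - wstar)"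
    proof -
      have h1: "\<And>v w. 2 * \<gamma> * inner ((1/\<gamma>) *\<^sub>R v) w = 2 * inner v w" using gam by simp
      show ?thesis unfolding h1 by (simp add: inner_diff_right)
    qed
    have q2: "inner (g3 k) (wstar - w3 k) = - inner (g3 k) (w3 k - wstar)"
      by (simp add: inner_diff_right)
    have "2 * \<gamma> * (a1 + a2 + a3 - (b1 + b2 + b3)) \<le> R"
    proof -
      have "2 * \<gamma> * (a1 + a2 + a3 - (b1 + b2 + b3)) \<le> 2 * \<gamma> * (- inner ((1/\<gamma>) *\<^sub>R (P - w1 k)) (wstar - w1 k) - inner (g3 k) (wstar - w3 k) - inner ((1/\<gamma>) *\<^sub>R (z k - w3 k)) (wstar - w3 k))"
        using j1 j2 j3 gam by (intro mult_left_mono) auto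
      also have "\<dots> = R" unfolding Rid using q1 q2 q3 by (simp add: algebra_simps)
      finally show ?thesis .
    qed
    then show ?thesis using a1 a2 a3 b1 b2 b3 by simp
  qed
  show ?thesis unfolding Let_def using goal unfolding R_def g2_def .
qed

end
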